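(* Let $f,g\in C[0,1]$ and let $\mathcal{R}$ be the ring of functions of the form $P(f,g)$, $x\mapsto p(f(x),g(x))$, where $p$ ranges over polynomials in two variables with real coefficients. Then for every $P(f,g)\in\mathcal{R}$, $$\overline{\dim}_B G(P(f,g))\le \max\{\overline{\dim}_B G(f),\ \overline{\dim}_B G(g)\}.$$
   Context: $C[0,1]$ is the space of real-valued continuous functions on $[0,1]$; $G(h)=\{(x,h(x)):x\in[0,1]\}\subset\mathbb{R}^2$ is the graph of $h$. For a nonempty bounded set $F$, $N_\delta(F)$ is the smallest number of sets of diameter at most $\delta$ covering $F$, and $\overline{\dim}_B F=\limsup_{\delta\to0}\frac{\log N_\delta(F)}{-\log\delta}$. *)

theory Defs
  imports "HOL-Analysis.Analysis"
begin

definition poly2_funs :: "(real \<Rightarrow> real \<Rightarrow> real) set" where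
  "poly2_funs = {p. \<exists>(n::nat) (c::nat \<Rightarrow> nat \<Rightarrow> real).
      p = (\<lambda>x y. \<Sum>i\<le>n. \<Sum>j\<le>n. c i j * x ^ i * y ^ j)}"

definition graph01 :: "(real \<Rightarrow> real) \<Rightarrow> (real \<times> real) set" where
  "graph01 h = {(x, h x) | x. x \<in> {0..1}}"

definition cover_num :: "real \<Rightarrow> 'a::metric_space set \<Rightarrow> nat" where
  "cover_num \<delta> F = (INF C \<in> {C. finite C \<and> (\<forall>S\<in>C. diameter S \<le> \<delta>) \<and> F \<subseteq> \<Union>C}. card C)"

definition upper_box_dim :: "'a::metric_space set \<Rightarrow> ereal" where
  "upper_box_dim F = Limsup (at_right 0)
      (\<lambda>\<delta>. ereal (ln (real (cover_num \<delta> F)) / - ln \<delta>))"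

end

theory Submission
  imports Defs "HOL-Real_Asymp.Real_Asymp"
begin


definition ctrl :: "(real \<Rightarrow> real) \<Rightarrow> (real \<Rightarrow> real) \<Rightarrow> (real \<Rightarrow> real) \<Rightarrow> bool" where
 "ctrl f g h \<longleftrightarrow> (\<exists>B. \<forall>x\<in>{0..1}. \<bar>h x\<bar> \<le> B) \<and>
    (\<exists>L. \<forall>x\<in>{0..1}. \<forall>y\<in>{0..1}. \<bar>h x - h y\<bar> \<le> L * (\<bar>f x - f y\<bar> + \<bar>g x - g y\<bar>))"

lemma ctrl_const: "ctrl f g (\<lambda>x. c)"
proof -
  have "\<forall>x\<in>{0..1}. \<bar>(\<lambda>x. c) x\<bar> \<le> \<bar>c\<bar>" by simp
  moreover have "\<forall>x\<in>{0..1}. \<forall>y\<in>{0..1}. \<bar>(\<lambda>x. c) x - (\<lambda>x. c) y\<bar> \<le> 0 * (\<bar>f x - f y\<bar> + \<bar>g x - g y\<bar>)"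
    by simp
  ultimately show ?thesis unfolding ctrl_def by blast
qed

lemma ctrl_add: "ctrl f g h1 \<Longrightarrow> ctrl f g h2 \<Longrightarrow> ctrl f g (\<lambda>x. h1 x + h2 x)"
  unfolding ctrl_def
proof (elim conjE exE, intro conjI)
  fix B1 L1 B2 L2
  assume b1: "\<forall>x\<in>{0..1}. \<bar>h1 x\<bar> \<le> B1" and b2: "\<forall>x\<in>{0..1}. \<bar>h2 x\<bar> \<le> B2"
   and l1: "\<forall>x\<in>{0..1}. \<forall>y\<in>{0..1}. \<bar>h1 x - h1 y\<bar> \<le> L1 * (\<bar>f x - f y\<bar> + \<bar>g x - g y\<bar>)"
   and l2: "\<forall>x\<in>{0..1}. \<forall>y\<in>{0..1}. \<bar>h2 x - h2 y\<bar> \<le> L2 * (\<bar>f x - f y\<bar> + \<bar>g x - g y\<bar>)"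
  show "\<exists>B. \<forall>x\<in>{0..1}. \<bar>h1 x + h2 x\<bar> \<le> B"
  proof (intro exI[of _ "B1+B2"] ballI)
    fix x :: real assume "x \<in> {0..1}"
    then have "\<bar>h1 x\<bar> \<le> B1" "\<bar>h2 x\<bar> \<le> B2" using b1 b2 by auto
    then show "\<bar>h1 x + h2 x\<bar> \<le> B1 + B2" using abs_triangle_ineq[of "h1 x" "h2 x"] by linarith
  qed
  show "\<exists>L. \<forall>x\<in>{0..1}. \<forall>y\<in>{0..1}. \<bar>h1 x + h2 x - (h1 y + h2 y)\<bar> \<le> L * (\<bar>f x - f y\<bar> + \<bar>g x - g y\<bar>)"
  proof (intro exI[of _ "L1+L2"] ballI)
    fix x y assume "x \<in> {0..1::real}" "y \<in> {0..1::real}"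
    with l1 l2 have "\<bar>h1 x - h1 y\<bar> \<le> L1 * (\<bar>f x - f y\<bar> + \<bar>g x - g y\<bar>)"
      "\<bar>h2 x - h2 y\<bar> \<le> L2 * (\<bar>f x - f y\<bar> + \<bar>g x - g y\<bar>)" by auto
    then show "\<bar>h1 x + h2 x - (h1 y + h2 y)\<bar> \<le> (L1+L2) * (\<bar>f x - f y\<bar> + \<bar>g x - g y\<bar>)"
      by (simp add: distrib_right) linarith
  qed
qed

lemma ctrl_mult: "ctrl f g h1 \<Longrightarrow> ctrl f g h2 \<Longrightarrow> ctrl f g (\<lambda>x. h1 x * h2 x)"
  unfolding ctrl_def
proof (elim conjE exE, intro conjI)
  fix B1 L1 B2 L2
  assume b1: "\<forall>x\<in>{0..1}. \<bar>h1 x\<bar> \<le> B1" and b2: "\<forall>x\<in>{0..1}. \<bar>h2 x\<bar> \<le> B2"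
   and l1: "\<forall>x\<in>{0..1}. \<forall>y\<in>{0..1}. \<bar>h1 x - h1 y\<bar> \<le> L1 * (\<bar>f x - f y\<bar> + \<bar>g x - g y\<bar>)"
   and l2: "\<forall>x\<in>{0..1}. \<forall>y\<in>{0..1}. \<bar>h2 x - h2 y\<bar> \<le> L2 * (\<bar>f x - f y\<bar> + \<bar>g x - g y\<bar>)"
  have B1: "0 \<le> B1" and B2: "0 \<le> B2" using b1 b2 by (auto dest: bspec[of _ _ 0] intro: order.trans[OF abs_ge_zero])
  show "\<exists>B. \<forall>x\<in>{0..1}. \<bar>h1 x * h2 x\<bar> \<le> B"
    using b1 b2 B1 B2 by (intro exI[of _ "B1*B2"]) (auto simp: abs_mult intro: mult_mono)
  show "\<exists>L. \<forall>x\<in>{0..1}. \<forall>y\<in>{0..1}. \<bar>h1 x * h2 x - h1 y * h2 y\<bar> \<le> L * (\<bar>f x - f y\<bar> + \<bar>g x - g y\<bar>)"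
  proof (intro exI[of _ "B1*L2+B2*L1"] ballI)
    fix x y assume x: "x \<in> {0..1::real}" and y: "y \<in> {0..1::real}"
    define D where "D = \<bar>f x - f y\<bar> + \<bar>g x - g y\<bar>"
    have e1: "\<bar>h1 x - h1 y\<bar> \<le> L1 * D" and e2: "\<bar>h2 x - h2 y\<bar> \<le> L2 * D"
      using l1 l2 x y by (auto simp: D_def)
    have m1: "\<bar>h1 x\<bar> * \<bar>h2 x - h2 y\<bar> \<le> B1 * (L2 * D)"
      using b1 x e2 B1 by (intro mult_mono) auto
    have m2: "\<bar>h2 y\<bar> * \<bar>h1 x - h1 y\<bar> \<le> B2 * (L1 * D)"
      using b2 y e1 B2 by (intro mult_mono) auto
    have m3: "h1 x * h2 x - h1 y * h2 y = h1 x * (h2 x - h2 y) + h2 y * (h1 x - h1 y)"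
      by (simp add: algebra_simps)
    have "\<bar>h1 x * h2 x - h1 y * h2 y\<bar> \<le> B1 * (L2 * D) + B2 * (L1 * D)"
    proof -
      have "\<bar>h1 x * (h2 x - h2 y) + h2 y * (h1 x - h1 y)\<bar> \<le> \<bar>h1 x\<bar> * \<bar>h2 x - h2 y\<bar> + \<bar>h2 y\<bar> * \<bar>h1 x - h1 y\<bar>"
        by (metis abs_mult abs_triangle_ineq)
      then show ?thesis using m1 m2 m3 by linarith
    qed
    then show "\<bar>h1 x * h2 x - h1 y * h2 y\<bar> \<le> (B1*L2+B2*L1) * D"
      by (simp add: algebra_simps)
  qed
qed

lemma ctrl_sum: "finite I \<Longrightarrow> (\<And>i. i \<in> I \<Longrightarrow> ctrl f g (h i)) \<Longrightarrow> ctrl f g (\<lambda>x. \<Sum>i\<in>I. h i x)"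
  by (induction I rule: finite_induct) (auto intro: ctrl_add ctrl_const)

lemma ctrl_pow: "ctrl f g h \<Longrightarrow> ctrl f g (\<lambda>x. h x ^ n)"
  by (induction n) (auto intro: ctrl_mult ctrl_const)

lemma ctrl_f:
  assumes "continuous_on {0..1} f" shows "ctrl f g f"
proof -
  obtain B where "\<forall>x\<in>{0..1::real}. norm (f x) \<le> B"
    using compact_imp_bounded[OF compact_continuous_image[OF assms compact_Icc]]
    by (auto simp: bounded_iff)
  then show ?thesis unfolding ctrl_def
    by (intro conjI exI[of _ B] exI[of _ 1]) auto
qed

lemma ctrl_g:
  assumes "continuous_on {0..1} g" shows "ctrl f g g"
proof -
  obtain B where "\<forall>x\<in>{0..1::real}. norm (g x) \<le> B"
    using compact_imp_bounded[OF compact_continuous_image[OF assms compact_Icc]]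
    by (auto simp: bounded_iff)
  then show ?thesis unfolding ctrl_def
    by (intro conjI exI[of _ B] exI[of _ 1]) auto
qed

lemma ctrl_poly:
  assumes "continuous_on {0..1} f" "continuous_on {0..1} g" "p \<in> poly2_funs"
  shows "ctrl f g (\<lambda>x. p (f x) (g x))"
proof -
  from assms(3) obtain n c where p: "p = (\<lambda>x y. \<Sum>i\<le>n. \<Sum>j\<le>n. c i j * x ^ i * y ^ j)"
    by (auto simp: poly2_funs_def)
  show ?thesis unfolding p
    by (intro ctrl_sum ctrl_mult ctrl_const ctrl_pow ctrl_f ctrl_g assms) auto
qed



lemma diameter_unbounded_eq:
  fixes S T :: "'a::metric_space set"
  assumes "S \<noteq> {}" "\<not> bounded S" "T \<noteq> {}" "\<not> bounded T"
  shows "diameter S = diameter T"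
proof -
  have *: "(\<lambda>z. \<forall>x\<in>(\<lambda>(x,y). dist x y) ` (U \<times> U). x \<le> z) = (\<lambda>z. False)"
    if U: "U \<noteq> {}" "\<not> bounded U" for U :: "'a set"
  proof (rule ext)
    fix z
    obtain a where a: "a \<in> U" using U by auto
    show "(\<forall>x\<in>(\<lambda>(x,y). dist x y) ` (U \<times> U). x \<le> z) = False"
    proof -
      have "\<not> (\<forall>y\<in>U. dist a y \<le> z)" using U(2) unfolding bounded_def by blast
      then show ?thesis using a by auto
    qed
  qed
  show ?thesis
    unfolding diameter_def Sup_real_def using *[OF assms(1,2)] *[OF assms(3,4)] assms by simp
qed

definition col :: "real \<Rightarrow> nat \<Rightarrow> real set" where
  "col w j = {real j * w .. (real j + 1) * w} \<inter> {0..1}"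

definition meets :: "(real \<Rightarrow> real) \<Rightarrow> real \<Rightarrow> nat \<Rightarrow> (real \<times> real) set \<Rightarrow> bool" where
  "meets \<phi> w j S \<longleftrightarrow> (\<exists>z\<in>col w j. (z, \<phi> z) \<in> S)"

lemma col_cover:
  assumes "w > 0" "x \<in> {0..1}"
  shows "\<exists>j<nat \<lceil>1/w\<rceil>. x \<in> col w j"
proof -
  define K where "K = nat \<lceil>1/w\<rceil>"
  have t0: "1/w > 0" using assms(1) by simp
  have c0: "0 \<le> \<lceil>1/w\<rceil>" using t0 by linarith
  have KK: "real K = of_int \<lceil>1/w\<rceil>" unfolding K_def using c0 by (simp add: of_nat_nat)
  have K1: "real K \<ge> 1/w" unfolding KK by linarith
  have K2: "real K < 1/w + 1" unfolding KK by linarith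
  have "real K > 0" using K1 t0 by linarith
  then have Kpos: "K \<ge> 1" by simp
  show ?thesis
  proof (cases "nat \<lfloor>x/w\<rfloor> < K")
    case True
    let ?j = "nat \<lfloor>x/w\<rfloor>"
    have jj: "real ?j = of_int \<lfloor>x/w\<rfloor>" using assms by simp
    have f1: "of_int \<lfloor>x/w\<rfloor> \<le> x/w" "x/w \<le> of_int \<lfloor>x/w\<rfloor> + 1" by linarith+
    have "of_int \<lfloor>x/w\<rfloor> * w \<le> x/w * w" using assms(1) f1 by (intro mult_right_mono) auto
    moreover have "x/w * w \<le> (of_int \<lfloor>x/w\<rfloor> + 1) * w" using assms(1) f1 by (intro mult_right_mono) auto
    ultimately have "real ?j * w \<le> x" "x \<le> (real ?j + 1) * w"
      using assms(1) unfolding jj by simp_all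
    then have "x \<in> col w ?j" using assms unfolding col_def by auto
    then show ?thesis using True unfolding K_def by blast
  next
    case False
    then have "K \<le> nat \<lfloor>x/w\<rfloor>" by simp
    then have k1: "real K \<le> real (nat \<lfloor>x/w\<rfloor>)" by simp
    have k2: "real (nat \<lfloor>x/w\<rfloor>) = of_int \<lfloor>x/w\<rfloor>" using assms by simp
    have k3: "of_int \<lfloor>x/w\<rfloor> \<le> x/w" by linarith
    have "x/w \<ge> real K" using k1 k2 k3 by linarith
    then have "x \<ge> real K * w" using assms(1) by (simp add: field_simps)
    moreover have "real K * w \<ge> 1" using K1 assms(1) by (simp add: field_simps)
    ultimately have x1: "x = 1" using assms by auto
    have "real (K - 1) * w \<le> 1" using K2 Kpos assms(1) by (simp add: of_nat_diff field_simps)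
    moreover have "(real (K - 1) + 1) * w \<ge> 1" using K1 Kpos assms(1) by (simp add: of_nat_diff field_simps)
    ultimately have "x \<in> col w (K - 1)" using x1 unfolding col_def by auto
    then show ?thesis using Kpos unfolding K_def[symmetric] by (intro exI[of _ "K-1"]) auto
  qed
qed

lemma col_base:
  assumes "w > 0" "j < nat \<lceil>1/w\<rceil>"
  shows "real j * w \<in> col w j"
proof -
  have "real j < 1/w" using assms(2) by linarith
  then have "real j * w < 1" using assms(1) by (simp add: field_simps)
  then show ?thesis using assms(1) unfolding col_def by auto
qed

lemma col_convex: "x \<in> col w j \<Longrightarrow> y \<in> col w j \<Longrightarrow> x \<le> z \<Longrightarrow> z \<le> y \<Longrightarrow> z \<in> col w j"
  unfolding col_def by auto

lemma osc_bound_aux: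
  assumes cont: "continuous_on {0..1} \<phi>" and fin: "finite A" and cov: "graph01 \<phi> \<subseteq> \<Union>A"
    and bd: "\<And>S. S \<in> A \<Longrightarrow> S = {} \<or> (bounded S \<and> diameter S \<le> \<delta>)"
    and d0: "0 \<le> \<delta>" and x: "x \<in> col w j" and y: "y \<in> col w j" and le: "\<phi> x \<le> \<phi> y"
  shows "\<phi> y - \<phi> x \<le> 2 * \<delta> * card {S\<in>A. meets \<phi> w j S}"
proof -
  define A' where "A' = {S\<in>A. meets \<phi> w j S}"
  define c where "c S = snd (SOME p. p \<in> S)" for S :: "(real\<times>real) set"
  have finA': "finite A'" using fin unfolding A'_def by auto
  have sub: "{\<phi> x .. \<phi> y} \<subseteq> (\<Union>S\<in>A'. {c S - \<delta> .. c S + \<delta>})"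
  proof
    fix t assume t: "t \<in> {\<phi> x .. \<phi> y}"
    have "\<exists>z\<in>col w j. \<phi> z = t"
    proof (cases "x \<le> y")
      case True
      have "continuous_on {x..y} \<phi>"
        by (rule continuous_on_subset[OF cont]) (use x y in \<open>auto simp: col_def\<close>)
      then obtain z where "x \<le> z" "z \<le> y" "\<phi> z = t" using IVT'[of \<phi> x t y] t True by auto
      then show ?thesis using col_convex[OF x y] by blast
    next
      case False
      have "continuous_on {y..x} \<phi>"
        by (rule continuous_on_subset[OF cont]) (use x y in \<open>auto simp: col_def\<close>)
      then obtain z where "y \<le> z" "z \<le> x" "\<phi> z = t" using IVT2'[of \<phi> x t y] t False by auto
      then show ?thesis using col_convex[OF y x] by blast
    qed
    then obtain z where z: "z \<in> col w j" "\<phi> z = t" by blast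
    then have "(z, t) \<in> graph01 \<phi>" unfolding graph01_def col_def by auto
    then obtain S where S: "S \<in> A" "(z, t) \<in> S" using cov by auto
    then have SA': "S \<in> A'" using z unfolding A'_def meets_def by auto
    have Sb: "bounded S" "diameter S \<le> \<delta>" using bd[OF S(1)] S(2) by auto
    have p: "(SOME p. p \<in> S) \<in> S" using S(2) by (metis someI)
    have "dist (z,t) (SOME p. p \<in> S) \<le> \<delta>"
      using diameter_bounded_bound[OF Sb(1) S(2) p] Sb(2) by linarith
    then have "dist t (c S) \<le> \<delta>" unfolding c_def
      using dist_snd_le[of "(z,t)" "SOME p. p \<in> S"] by simp
    then have "t \<in> {c S - \<delta> .. c S + \<delta>}" by (auto simp: dist_real_def)
    then show "t \<in> (\<Union>S\<in>A'. {c S - \<delta> .. c S + \<delta>})" using SA' by auto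
  qed
  have "\<phi> y - \<phi> x = measure lborel {\<phi> x .. \<phi> y}" using le by simp
  also have "\<dots> \<le> measure lborel (\<Union>S\<in>A'. {c S - \<delta> .. c S + \<delta>})"
    using sub finA' by (intro measure_mono_fmeasurable fmeasurable_compact) auto
  also have "\<dots> \<le> (\<Sum>S\<in>A'. measure lborel {c S - \<delta> .. c S + \<delta>})"
    using finA' by (intro measure_UNION_le) auto
  also have "\<dots> \<le> (\<Sum>S\<in>A'. 2 * \<delta>)"
    using d0 by (intro sum_mono) auto
  also have "\<dots> = 2 * \<delta> * card A'" by simp
  finally show ?thesis unfolding A'_def .
qed

lemma osc_bound:
  assumes cont: "continuous_on {0..1} \<phi>" and fin: "finite A" and cov: "graph01 \<phi> \<subseteq> \<Union>A"
    and bd: "\<And>S. S \<in> A \<Longrightarrow> S = {} \<or> (bounded S \<and> diameter S \<le> \<delta>)"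
    and d0: "0 \<le> \<delta>" and x: "x \<in> col w j" and y: "y \<in> col w j"
  shows "\<bar>\<phi> x - \<phi> y\<bar> \<le> 2 * \<delta> * card {S\<in>A. meets \<phi> w j S}"
proof (cases "\<phi> x \<le> \<phi> y")
  case True
  then show ?thesis using osc_bound_aux[OF cont fin cov bd d0 x y] by auto
next
  case False
  then show ?thesis using osc_bound_aux[OF cont fin cov bd d0 y x] by auto
qed

lemma meets_pos:
  assumes "w > 0" "j < nat \<lceil>1/w\<rceil>" "finite A" "graph01 \<phi> \<subseteq> \<Union>A"
  shows "card {S\<in>A. meets \<phi> w j S} \<ge> 1"
proof -
  have c: "real j * w \<in> col w j" by (rule col_base[OF assms(1,2)])
  then have "(real j * w, \<phi> (real j * w)) \<in> graph01 \<phi>" unfolding graph01_def col_def by auto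
  then obtain S where "S \<in> A" "(real j * w, \<phi> (real j * w)) \<in> S" using assms(4) by auto
  then have "S \<in> {S\<in>A. meets \<phi> w j S}" using c unfolding meets_def by auto
  moreover have "finite {S\<in>A. meets \<phi> w j S}" using assms(3) by auto
  ultimately have "card {S\<in>A. meets \<phi> w j S} > 0" using card_gt_0_iff by blast
  then show ?thesis by simp
qed

lemma meets_few:
  fixes K :: nat
  assumes w: "w > 0" and bd: "S = {} \<or> (bounded S \<and> diameter S \<le> 2 * w)"
  shows "card {j. j < K \<and> meets \<phi> w j S} \<le> 4"
proof (cases "{j. j < K \<and> meets \<phi> w j S} = {}")
  case True show ?thesis unfolding True by simp
next
  case False
  define J where "J = {j. j < K \<and> meets \<phi> w j S}"
  define m where "m = Min J"
  have finJ: "finite J" unfolding J_def by auto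
  have mJ: "m \<in> J" using False finJ unfolding m_def J_def by (intro Min_in) auto
  have "J \<subseteq> {m..m+3}"
  proof
    fix j assume jJ: "j \<in> J"
    have "m \<le> j" using finJ jJ unfolding m_def by simp
    obtain z where z: "z \<in> col w m" "(z, \<phi> z) \<in> S" using mJ unfolding J_def meets_def by auto
    obtain z' where z': "z' \<in> col w j" "(z', \<phi> z') \<in> S" using jJ unfolding J_def meets_def by auto
    have Sb: "bounded S" "diameter S \<le> 2 * w" using bd z by auto
    have "dist (z', \<phi> z') (z, \<phi> z) \<le> 2 * w"
      using diameter_bounded_bound[OF Sb(1) z'(2) z(2)] Sb(2) by linarith
    then have "dist z' z \<le> 2 * w" using dist_fst_le[of "(z', \<phi> z')" "(z, \<phi> z)"] by simp
    then have "z' \<le> z + 2 * w" by (auto simp: dist_real_def)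
    moreover have "real j * w \<le> z'" "z \<le> (real m + 1) * w" using z z' unfolding col_def by auto
    ultimately have "real j * w \<le> (real m + 3) * w" by (simp add: algebra_simps)
    then have "real j \<le> real m + 3" using w by simp
    then have "j \<le> m + 3" by linarith
    then show "j \<in> {m..m+3}" using \<open>m \<le> j\<close> by simp
  qed
  then have "card J \<le> card {m..m+3}" by (intro card_mono) auto
  then show ?thesis unfolding J_def by simp
qed

lemma card_filter_sum: "finite B \<Longrightarrow> card {j\<in>B. P j} = (\<Sum>j\<in>B. if P j then 1 else (0::nat))"
  by (simp add: sum.If_cases Int_def)

lemma double_count:
  fixes K :: nat
  assumes "finite A"
  shows "(\<Sum>j<K. card {S\<in>A. P j S}) = (\<Sum>S\<in>A. card {j. j < K \<and> P j S})"
proof -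
  have "(\<Sum>j<K. card {S\<in>A. P j S}) = (\<Sum>j<K. \<Sum>S\<in>A. if P j S then 1 else 0)"
    using assms by (simp add: sum.If_cases Int_def)
  also have "\<dots> = (\<Sum>S\<in>A. \<Sum>j<K. if P j S then 1 else 0)" by (rule sum.swap)
  also have "\<dots> = (\<Sum>S\<in>A. card {j. j < K \<and> P j S})"
  proof (intro sum.cong refl)
    fix S
    have e: "{j. j < K \<and> P j S} = {j\<in>{..<K}. P j S}" by auto
    have "card {j\<in>{..<K}. P j S} = (\<Sum>j<K. if P j S then 1 else 0)"
      by (rule card_filter_sum) simp
    then show "(\<Sum>j<K. if P j S then 1 else 0) = card {j. j < K \<and> P j S}"
      unfolding e by simp
  qed
  finally show ?thesis .
qed

lemma sum_meets:
  fixes K :: nat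
  assumes w: "w > 0" and fin: "finite A" and bd: "\<And>S. S \<in> A \<Longrightarrow> S = {} \<or> (bounded S \<and> diameter S \<le> 2 * w)"
  shows "(\<Sum>j<K. card {S\<in>A. meets \<phi> w j S}) \<le> 4 * card A"
proof -
  have "(\<Sum>j<K. card {S\<in>A. meets \<phi> w j S}) = (\<Sum>S\<in>A. card {j. j < K \<and> meets \<phi> w j S})"
    by (rule double_count[OF fin])
  also have "\<dots> \<le> (\<Sum>S\<in>A. 4)" by (intro sum_mono meets_few[OF w bd])
  finally show ?thesis by simp
qed



lemma cover_num_le:
  assumes "finite C" "\<forall>S\<in>C. diameter S \<le> \<delta>" "F \<subseteq> \<Union>C"
  shows "cover_num \<delta> F \<le> card C"
  unfolding cover_num_def using assms by (intro cINF_lower) auto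

lemma cover_exists:
  fixes F :: "'a::euclidean_space set"
  assumes "compact F" "\<delta> > 0"
  shows "\<exists>C. finite C \<and> (\<forall>S\<in>C. diameter S \<le> \<delta>) \<and> F \<subseteq> \<Union>C"
proof -
  have "F \<subseteq> (\<Union>x\<in>F. ball x (\<delta>/2))" using assms(2) by auto
  then obtain C' where C': "C' \<subseteq> F" "finite C'" "F \<subseteq> (\<Union>x\<in>C'. ball x (\<delta>/2))"
    using compactE_image[OF assms(1), of F "\<lambda>x. ball x (\<delta>/2)"] by auto
  show ?thesis
    using C' assms(2) by (intro exI[of _ "(\<lambda>x. ball x (\<delta>/2)) ` C'"]) auto
qed

lemma cover_attained:
  fixes F :: "'a::euclidean_space set"
  assumes "compact F" "\<delta> > 0"
  shows "\<exists>C. finite C \<and> (\<forall>S\<in>C. diameter S \<le> \<delta>) \<and> F \<subseteq> \<Union>C \<and> card C = cover_num \<delta> F"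
proof -
  define X where "X = {C. finite C \<and> (\<forall>S\<in>C. diameter S \<le> \<delta>) \<and> F \<subseteq> \<Union>C}"
  have "X \<noteq> {}" using cover_exists[OF assms] unfolding X_def by auto
  then have "Inf (card ` X) \<in> card ` X" by (intro Inf_nat_def1) auto
  then obtain C where "C \<in> X" "card C = Inf (card ` X)" by auto
  then show ?thesis unfolding X_def cover_num_def by auto
qed

lemma compact_graph01:
  assumes "continuous_on {0..1} \<phi>"
  shows "compact (graph01 \<phi>)"
proof -
  have "graph01 \<phi> = (\<lambda>x. (x, \<phi> x)) ` {0..1}" unfolding graph01_def by auto
  moreover have "continuous_on {0..1} (\<lambda>x. (x, \<phi> x))"
    by (intro continuous_on_Pair continuous_on_id assms)
  ultimately show ?thesis using compact_continuous_image compact_Icc by metis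
qed

lemma cover_upper:
  fixes h :: "real \<Rightarrow> real" and R :: "nat \<Rightarrow> real"
  assumes w: "w > 0"
    and R: "\<And>j x. j < nat \<lceil>1/w\<rceil> \<Longrightarrow> x \<in> col w j \<Longrightarrow> \<bar>h x - h (real j * w)\<bar> \<le> R j"
  shows "real (cover_num (2*w) (graph01 h)) \<le> (\<Sum>j<nat \<lceil>1/w\<rceil>. 2 * real (nat \<lceil>R j / w\<rceil>) + 1)"
proof -
  define K where "K = nat \<lceil>1/w\<rceil>"
  define N where "N j = nat \<lceil>R j / w\<rceil>" for j
  define Q where "Q j k = {real j * w .. (real j + 1) * w} \<times>
      {h (real j * w) + of_int k * w .. h (real j * w) + (of_int k + 1) * w}" for j and k :: int
  define F where "F = (\<Union>j<K. Q j ` {- int (N j) .. int (N j)})"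
  have finF: "finite F" unfolding F_def by auto
  have diam: "\<forall>S\<in>F. diameter S \<le> 2 * w"
  proof
    fix S assume "S \<in> F"
    then obtain j k where S: "S = Q j k" unfolding F_def by auto
    show "diameter S \<le> 2 * w"
    proof (rule diameter_le)
      show "S \<noteq> {} \<or> 0 \<le> 2 * w" using w by simp
      fix p q assume "p \<in> S" "q \<in> S"
      then have a: "\<bar>fst p - fst q\<bar> \<le> w" "\<bar>snd p - snd q\<bar> \<le> w"
        unfolding S Q_def by (auto simp: mem_Times_iff algebra_simps abs_le_iff)
      have "norm (p - q) = norm (fst p - fst q, snd p - snd q)" by (cases p, cases q) simp
      also have "\<dots> \<le> norm (fst p - fst q) + norm (snd p - snd q)" by (rule norm_Pair_le)
      also have "\<dots> \<le> 2 * w" using a by simp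
      finally show "norm (p - q) \<le> 2 * w" .
    qed
  qed
  have cov: "graph01 h \<subseteq> \<Union>F"
  proof
    fix p assume "p \<in> graph01 h"
    then obtain x where x: "x \<in> {0..1}" "p = (x, h x)" unfolding graph01_def by auto
    obtain j where j: "j < K" "x \<in> col w j" using col_cover[OF w x(1)] unfolding K_def by auto
    define m where "m = h (real j * w)"
    define t where "t = (h x - m) / w"
    define k where "k = \<lfloor>t\<rfloor>"
    have Rj: "\<bar>h x - m\<bar> \<le> R j" using R[OF j(1)[unfolded K_def] j(2)] unfolding m_def .
    have R0: "0 \<le> R j / w" using Rj w by (auto intro: divide_nonneg_pos order.trans[OF abs_ge_zero])
    have tb: "\<bar>t\<bar> \<le> R j / w" unfolding t_def using Rj w by (simp add: abs_divide divide_right_mono)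
    have cN: "of_int (int (N j)) = real_of_int \<lceil>R j / w\<rceil>" unfolding N_def using R0 by simp
    have c1: "R j / w \<le> of_int \<lceil>R j / w\<rceil>" by (rule le_of_int_ceiling)
    have k1: "of_int k \<le> t" "t < of_int k + 1" unfolding k_def by linarith+
    have "real_of_int k \<le> real_of_int (int (N j))" using k1 tb c1 cN by linarith
    then have kN1: "k \<le> int (N j)" by linarith
    have "real_of_int (- int (N j)) < real_of_int k + 1" using k1 tb c1 cN by linarith
    then have "- int (N j) < k + 1" by linarith
    then have kN2: "- int (N j) \<le> k" by linarith
    have "of_int k * w \<le> t * w" using k1 w by (intro mult_right_mono) auto
    moreover have "t * w \<le> (of_int k + 1) * w" using k1 w by (intro mult_right_mono) auto
    moreover have "t * w = h x - m" unfolding t_def using w by simp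
    ultimately have "h x \<in> {m + of_int k * w .. m + (of_int k + 1) * w}" by auto
    moreover have "x \<in> {real j * w .. (real j + 1) * w}" using j(2) unfolding col_def by auto
    ultimately have "p \<in> Q j k" unfolding Q_def m_def x(2) by auto
    moreover have "k \<in> {- int (N j) .. int (N j)}" using kN1 kN2 by simp
    ultimately have "p \<in> \<Union>(Q j ` {- int (N j) .. int (N j)})" by blast
    then show "p \<in> \<Union>F" unfolding F_def using j(1) by blast
  qed
  have "cover_num (2*w) (graph01 h) \<le> card F" by (rule cover_num_le[OF finF diam cov])
  also have "card F \<le> (\<Sum>j<K. card (Q j ` {- int (N j) .. int (N j)}))"
    unfolding F_def by (rule card_UN_le) simp
  also have "\<dots> \<le> (\<Sum>j<K. 2 * N j + 1)"
  proof (intro sum_mono)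
    fix j
    have "card (Q j ` {- int (N j) .. int (N j)}) \<le> card {- int (N j) .. int (N j)}"
      by (rule card_image_le) simp
    also have "\<dots> = 2 * N j + 1" by simp
    finally show "card (Q j ` {- int (N j) .. int (N j)}) \<le> 2 * N j + 1" .
  qed
  finally have "real (cover_num (2*w) (graph01 h)) \<le> real (\<Sum>j<K. 2 * N j + 1)" by linarith
  then show ?thesis unfolding K_def N_def by (simp add: add.commute)
qed



lemma core_bound:
  fixes f g h :: "real \<Rightarrow> real"
  assumes cf: "continuous_on {0..1} f" and cg: "continuous_on {0..1} g"
    and Lh: "\<And>x y. x \<in> {0..1} \<Longrightarrow> y \<in> {0..1} \<Longrightarrow> \<bar>h x - h y\<bar> \<le> L * (\<bar>f x - f y\<bar> + \<bar>g x - g y\<bar>)"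
    and w: "w > 0" and hyp: "\<And>S::(real\<times>real) set. diameter S \<le> 2*w \<Longrightarrow> S = {} \<or> bounded S"
  shows "real (cover_num (2*w) (graph01 h)) \<le> 4*(8*\<bar>L\<bar>+3) * (real (cover_num (2*w) (graph01 f)) + real (cover_num (2*w) (graph01 g)))"
proof -
  define K where "K = nat \<lceil>1/w\<rceil>"
  have w2: "2*w > 0" using w by simp
  obtain Af where Af: "finite Af" "\<forall>S\<in>Af. diameter S \<le> 2*w" "graph01 f \<subseteq> \<Union>Af" "card Af = cover_num (2*w) (graph01 f)"
    using cover_attained[OF compact_graph01[OF cf] w2] by blast
  obtain Bg where Bg: "finite Bg" "\<forall>S\<in>Bg. diameter S \<le> 2*w" "graph01 g \<subseteq> \<Union>Bg" "card Bg = cover_num (2*w) (graph01 g)"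
    using cover_attained[OF compact_graph01[OF cg] w2] by blast
  have bdA: "\<And>S. S \<in> Af \<Longrightarrow> S = {} \<or> (bounded S \<and> diameter S \<le> 2*w)" using Af(2) hyp by blast
  have bdB: "\<And>S. S \<in> Bg \<Longrightarrow> S = {} \<or> (bounded S \<and> diameter S \<le> 2*w)" using Bg(2) hyp by blast
  define a where "a j = card {S\<in>Af. meets f w j S}" for j
  define b where "b j = card {S\<in>Bg. meets g w j S}" for j
  define R where "R j = \<bar>L\<bar> * (4*w * real (a j) + 4*w * real (b j))" for j
  have Rb: "\<bar>h x - h (real j * w)\<bar> \<le> R j" if j: "j < nat \<lceil>1/w\<rceil>" and x: "x \<in> col w j" for j x
  proof -
    have base: "real j * w \<in> col w j" by (rule col_base[OF w j])
    have in01: "x \<in> {0..1}" "real j * w \<in> {0..1}" using x base unfolding col_def by auto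
    define D where "D = \<bar>f x - f (real j * w)\<bar> + \<bar>g x - g (real j * w)\<bar>"
    have D0: "0 \<le> D" unfolding D_def by simp
    have "\<bar>f x - f (real j * w)\<bar> \<le> 2 * (2*w) * a j" unfolding a_def
      by (rule osc_bound[OF cf Af(1) Af(3) bdA _ x base]) (use w in auto)
    moreover have "\<bar>g x - g (real j * w)\<bar> \<le> 2 * (2*w) * b j" unfolding b_def
      by (rule osc_bound[OF cg Bg(1) Bg(3) bdB _ x base]) (use w in auto)
    ultimately have Db: "D \<le> 4*w * real (a j) + 4*w * real (b j)" unfolding D_def by simp
    have "\<bar>h x - h (real j * w)\<bar> \<le> L * D" unfolding D_def by (rule Lh[OF in01])
    also have "\<dots> \<le> \<bar>L\<bar> * D" using D0 by (intro mult_right_mono) auto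
    also have "\<dots> \<le> R j" unfolding R_def using Db by (intro mult_left_mono) auto
    finally show ?thesis .
  qed
  have up: "real (cover_num (2*w) (graph01 h)) \<le> (\<Sum>j<K. 2 * real (nat \<lceil>R j / w\<rceil>) + 1)"
    unfolding K_def by (rule cover_upper[of w h R, OF w Rb])
  have tbd: "2 * real (nat \<lceil>R j / w\<rceil>) + 1 \<le> (8*\<bar>L\<bar>+3) * (real (a j) + real (b j))" if j: "j < K" for j
  proof -
    have a1: "a j \<ge> 1" unfolding a_def by (rule meets_pos[OF w j[unfolded K_def] Af(1) Af(3)])
    have R0: "0 \<le> R j" unfolding R_def using w by simp
    have Rw: "R j / w = 4 * \<bar>L\<bar> * (real (a j) + real (b j))" unfolding R_def using w
      by (simp add: field_simps)
    have "0 \<le> R j / w" using R0 w by simp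
    then have "real (nat \<lceil>R j / w\<rceil>) = of_int \<lceil>R j / w\<rceil>" by simp
    also have "\<dots> \<le> R j / w + 1" by linarith
    finally have n1: "real (nat \<lceil>R j / w\<rceil>) \<le> 4 * \<bar>L\<bar> * (real (a j) + real (b j)) + 1" unfolding Rw .
    have ab1: "1 \<le> real (a j) + real (b j)" using a1 by simp
    have "3 \<le> 3 * (real (a j) + real (b j))" using ab1 by simp
    then show ?thesis using n1 by (simp add: algebra_simps)
  qed
  have "(\<Sum>j<K. 2 * real (nat \<lceil>R j / w\<rceil>) + 1) \<le> (\<Sum>j<K. (8*\<bar>L\<bar>+3) * (real (a j) + real (b j)))"
    by (intro sum_mono tbd) simp
  also have "\<dots> = (8*\<bar>L\<bar>+3) * (real (\<Sum>j<K. a j) + real (\<Sum>j<K. b j))"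
    by (simp add: sum_distrib_left sum.distrib distrib_left)
  also have "\<dots> \<le> (8*\<bar>L\<bar>+3) * (real (4 * card Af) + real (4 * card Bg))"
  proof -
    have s1: "(\<Sum>j<K. a j) \<le> 4 * card Af" unfolding a_def by (rule sum_meets[OF w Af(1) bdA])
    have s2: "(\<Sum>j<K. b j) \<le> 4 * card Bg" unfolding b_def by (rule sum_meets[OF w Bg(1) bdB])
    have r1: "real (\<Sum>j<K. a j) \<le> real (4 * card Af)" using s1 by (simp only: of_nat_le_iff)
    have r2: "real (\<Sum>j<K. b j) \<le> real (4 * card Bg)" using s2 by (simp only: of_nat_le_iff)
    have "real (\<Sum>j<K. a j) + real (\<Sum>j<K. b j) \<le> real (4 * card Af) + real (4 * card Bg)"
      using r1 r2 by (rule add_mono)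
    then show ?thesis by (rule mult_left_mono) simp
  qed
  also have "\<dots> = 4*(8*\<bar>L\<bar>+3) * (real (cover_num (2*w) (graph01 f)) + real (cover_num (2*w) (graph01 g)))"
    using Af(4) Bg(4) by (simp add: algebra_simps)
  finally show ?thesis using up by linarith
qed



lemma lim_aux: "((\<lambda>\<delta>::real. c / - ln \<delta>) \<longlongrightarrow> 0) (at_right 0)"
  by real_asymp

lemma ln_nat_nonneg: "0 \<le> ln (real (n::nat))"
  by (cases "n = 0") auto

lemma ln_aux:
  assumes "C \<ge> 1" "real (n::nat) \<le> C * max (real (m1::nat)) (real (m2::nat))"
  shows "ln (real n) \<le> ln C + max (ln (real m1)) (ln (real m2))"
proof (cases "n = 0")
  case True
  have "0 \<le> ln C" using assms(1) by simp
  then show ?thesis using True ln_nat_nonneg[of m1] ln_nat_nonneg[of m2] by simp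
next
  case False
  define M where "M = max (real m1) (real m2)"
  have n1: "real n \<ge> 1" using False by simp
  have M0: "M \<ge> 0" unfolding M_def by simp
  have "M \<noteq> 0"
  proof
    assume "M = 0"
    then have "real n \<le> 0" using assms(2) unfolding M_def[symmetric] by simp
    with n1 show False by simp
  qed
  with M0 have "M > 0" by simp
  have "ln (real n) \<le> ln (C * M)" using n1 assms \<open>M > 0\<close> unfolding M_def by simp
  also have "\<dots> = ln C + ln M" using assms(1) \<open>M > 0\<close> by (simp add: ln_mult)
  also have "ln M \<le> max (ln (real m1)) (ln (real m2))" unfolding M_def by (simp add: max_def)
  finally show ?thesis by simp
qed



lemma eventually_ln_bound:
  fixes f g :: "real \<Rightarrow> real"
  assumes cf: "continuous_on {0..1} f" and cg: "continuous_on {0..1} g" and p: "p \<in> poly2_funs"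
  shows "\<exists>C\<ge>1. eventually (\<lambda>\<delta>. ln (real (cover_num \<delta> (graph01 (\<lambda>x. p (f x) (g x)))))
            \<le> ln C + max (ln (real (cover_num \<delta> (graph01 f)))) (ln (real (cover_num \<delta> (graph01 g))))) (at_right 0)"
proof -
  define h where "h = (\<lambda>x. p (f x) (g x))"
  have "ctrl f g h" unfolding h_def by (rule ctrl_poly[OF cf cg p])
  then obtain L where Lh: "\<And>x y. x \<in> {0..1} \<Longrightarrow> y \<in> {0..1} \<Longrightarrow> \<bar>h x - h y\<bar> \<le> L * (\<bar>f x - f y\<bar> + \<bar>g x - g y\<bar>)"
    unfolding ctrl_def by blast
  define C where "C = 8*(8*\<bar>L\<bar>+3)"
  have C1: "C \<ge> 1" unfolding C_def by simp
  define c0 where "c0 = diameter (UNIV :: (real\<times>real) set)"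
  have "eventually (\<lambda>\<delta>. ln (real (cover_num \<delta> (graph01 h)))
            \<le> ln C + max (ln (real (cover_num \<delta> (graph01 f)))) (ln (real (cover_num \<delta> (graph01 g))))) (at_right 0)"
  proof (cases "c0 > 0")
    case True
    show ?thesis unfolding eventually_at_right_field
    proof (intro exI[of _ c0] conjI allI impI)
      show "0 < c0" by (rule True)
      fix \<delta> :: real assume d0: "0 < \<delta>" and dc: "\<delta> < c0"
      define w where "w = \<delta>/2"
      have w: "w > 0" and dw: "\<delta> = 2*w" using d0 unfolding w_def by auto
      have hyp: "S = {} \<or> bounded S" if "diameter S \<le> 2*w" for S :: "(real\<times>real) set"
      proof (rule ccontr)
        assume "\<not> (S = {} \<or> bounded S)"
        then have "diameter S = c0" unfolding c0_def by (intro diameter_unbounded_eq) auto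
        then show False using that dw dc by simp
      qed
      have "real (cover_num (2*w) (graph01 h)) \<le> 4*(8*\<bar>L\<bar>+3) * (real (cover_num (2*w) (graph01 f)) + real (cover_num (2*w) (graph01 g)))"
        by (rule core_bound[OF cf cg Lh w hyp])
      also have "\<dots> \<le> 4*(8*\<bar>L\<bar>+3) * (2 * max (real (cover_num (2*w) (graph01 f))) (real (cover_num (2*w) (graph01 g))))"
        by (intro mult_left_mono) auto
      also have "\<dots> = C * max (real (cover_num (2*w) (graph01 f))) (real (cover_num (2*w) (graph01 g)))"
        unfolding C_def by simp
      finally show "ln (real (cover_num \<delta> (graph01 h)))
            \<le> ln C + max (ln (real (cover_num \<delta> (graph01 f)))) (ln (real (cover_num \<delta> (graph01 g))))"
        unfolding dw by (rule ln_aux[OF C1])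
    qed
  next
    case False
    show ?thesis unfolding eventually_at_right_field
    proof (intro exI[of _ 1] conjI allI impI)
      fix \<delta> :: real assume d0: "0 < \<delta>"
      have "cover_num \<delta> (graph01 h) \<le> card {UNIV :: (real\<times>real) set}"
        using False d0 unfolding c0_def by (intro cover_num_le) auto
      then have "cover_num \<delta> (graph01 h) \<le> 1" by simp
      then have "ln (real (cover_num \<delta> (graph01 h))) \<le> 0"
        by (cases "cover_num \<delta> (graph01 h) = 0") auto
      moreover have "0 \<le> ln C" using C1 by simp
      ultimately show "ln (real (cover_num \<delta> (graph01 h)))
            \<le> ln C + max (ln (real (cover_num \<delta> (graph01 f)))) (ln (real (cover_num \<delta> (graph01 g))))"
        using ln_nat_nonneg[of "cover_num \<delta> (graph01 f)"] by linarith
    qed simp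
  qed
  then show ?thesis using C1 unfolding h_def by blast
qed

lemma div_max_aux:
  assumes "a \<le> b + max c d" "(t::real) > 0"
  shows "a / t \<le> b / t + max (c / t) (d / t)"
proof -
  have "a / t \<le> (b + max c d) / t" using assms by (intro divide_right_mono) auto
  also have "\<dots> = b / t + max c d / t" by (simp add: add_divide_distrib)
  also have "max c d / t = max (c / t) (d / t)"
    using assms(2) by (cases "c \<le> d") (auto simp: max_def divide_right_mono divide_le_cancel)
  finally show ?thesis .
qed

theorem theorem3p7:
  fixes f g :: "real \<Rightarrow> real"
  assumes "continuous_on {0..1} f" and "continuous_on {0..1} g"
  shows "\<forall>p \<in> poly2_funs.
           upper_box_dim (graph01 (\<lambda>x. p (f x) (g x)))
             \<le> max (upper_box_dim (graph01 f)) (upper_box_dim (graph01 g))"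
proof
  fix p assume p: "p \<in> poly2_funs"
  define rh where "rh \<delta> = ln (real (cover_num \<delta> (graph01 (\<lambda>x. p (f x) (g x))))) / - ln \<delta>" for \<delta> :: real
  define rf where "rf \<delta> = ln (real (cover_num \<delta> (graph01 f))) / - ln \<delta>" for \<delta> :: real
  define rg where "rg \<delta> = ln (real (cover_num \<delta> (graph01 g))) / - ln \<delta>" for \<delta> :: real
  obtain C where C1: "C \<ge> 1" and evC: "eventually (\<lambda>\<delta>. ln (real (cover_num \<delta> (graph01 (\<lambda>x. p (f x) (g x)))))
            \<le> ln C + max (ln (real (cover_num \<delta> (graph01 f)))) (ln (real (cover_num \<delta> (graph01 g))))) (at_right 0)"
    using eventually_ln_bound[OF assms p] by blast
  have ev01: "eventually (\<lambda>\<delta>::real. 0 < \<delta> \<and> \<delta> < 1) (at_right 0)"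
    unfolding eventually_at_right_field by (intro exI[of _ 1]) auto
  have ev: "eventually (\<lambda>\<delta>. rh \<delta> \<le> ln C / - ln \<delta> + max (rf \<delta>) (rg \<delta>)) (at_right 0)"
    using evC ev01
  proof eventually_elim
    case (elim \<delta>)
    then have t0: "- ln \<delta> > 0" by simp
    show ?case unfolding rh_def rf_def rg_def by (rule div_max_aux[OF elim(1) t0])
  qed
  define M where "M = max (Limsup (at_right 0) (\<lambda>\<delta>. ereal (rf \<delta>))) (Limsup (at_right 0) (\<lambda>\<delta>. ereal (rg \<delta>)))"
  have "Limsup (at_right 0) (\<lambda>\<delta>. ereal (rh \<delta>)) \<le> M"
    unfolding Limsup_le_iff
  proof (intro allI impI)
    fix y assume "M < y"
    then obtain z1 where z1: "M < ereal z1" "ereal z1 < y" using ereal_dense2 by blast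
    then obtain z2 where z2: "ereal z1 < ereal z2" "ereal z2 < y" using ereal_dense2 by blast
    have "Limsup (at_right 0) (\<lambda>\<delta>. ereal (rf \<delta>)) < ereal z1" using z1 unfolding M_def by simp
    then have e1: "eventually (\<lambda>\<delta>. ereal (rf \<delta>) < ereal z1) (at_right 0)" by (rule Limsup_lessD)
    have "Limsup (at_right 0) (\<lambda>\<delta>. ereal (rg \<delta>)) < ereal z1" using z1 unfolding M_def by simp
    then have e2: "eventually (\<lambda>\<delta>. ereal (rg \<delta>) < ereal z1) (at_right 0)" by (rule Limsup_lessD)
    have "z2 - z1 > 0" using z2 by simp
    then have e3: "eventually (\<lambda>\<delta>. ln C / - ln \<delta> < z2 - z1) (at_right 0)"
      using lim_aux[of "ln C"] by (rule order_tendstoD(2)[rotated])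
    from ev e1 e2 e3 show "eventually (\<lambda>\<delta>. y > ereal (rh \<delta>)) (at_right 0)"
    proof eventually_elim
      case (elim \<delta>)
      then have "rh \<delta> < z2" by simp
      then have "ereal (rh \<delta>) < ereal z2" by simp
      then show ?case using z2(2) by (rule less_trans)
    qed
  qed
  then show "upper_box_dim (graph01 (\<lambda>x. p (f x) (g x)))
             \<le> max (upper_box_dim (graph01 f)) (upper_box_dim (graph01 g))"
    unfolding upper_box_dim_def M_def rh_def rf_def rg_def .
qed

end
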